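(* Let $n\ge 1$, $d_1,\dots,d_n\ge 1$, $L_i\in\mathbb{C}^{d_i\times d_i}$ ($i=1,\dots,n$) and $C_{i,i-1}\in\mathbb{C}^{d_i\times d_{i-1}}$ ($i=2,\dots,n$). Assume: (i) each $L_i$ is invertible and diagonalizable, $L_iV_i=V_i\Lambda_i$ with $V_i$ invertible and $\Lambda_i=\mathrm{diag}(\lambda_{i,1},\dots,\lambda_{i,d_i})$; (ii) $\sigma(L_i)\cap\sigma(L_j)=\emptyset$ for all $i\neq j$; (iii) $\|L_1\|<\|L_2\|<\cdots<\|L_n\|\le 1$. Then for every $i\in\{1,\dots,n\}$, $s_i\in\{1,\dots,d_i\}$, $x=(x_1,\dots,x_n)\in\mathbb{C}^{d_1}\times\cdots\times\mathbb{C}^{d_n}$ and $t\in\mathbb{N}$, $$\big|\Psi_{i,s_i}(\mathsf{Lin}^{\circ t}(x))-\Psi_{i,s_i}(\mathsf{Nom}^{\circ t}(\mathsf{pert}(x)))\big|\le\|\psi_{i,s_i}\|\sum_{j=1}^{i-1}\|D_{i,j}\|\,\big\|L_j^t\,\mathsf{pert}_j(x_1,\dots,x_j)\big\|,$$ and $$\lim_{t\to\infty}\frac{\big|\Psi_{i,s_i}(\mathsf{Lin}^{\circ t}(x))-\Psi_{i,s_i}(\mathsf{Nom}^{\circ t}(\mathsf{pert}(x)))\big|}{\|L_i\|^t}=0.$$ (Equivalently, in Koopman notation, $|(\mathcal U_{\mathsf{Lin}}^{\circ t}\Psi_{i,s_i})(x)-(\mathcal U_{\mathsf{Nom}}^{\circ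 t}\Psi_{i,s_i})(\mathsf{pert}(x))|$ obeys these bounds, where $\mathcal U_F f=f\circ F$.)
   Context: Each $\mathbb{C}^{d_i}$ carries a fixed norm $\|\cdot\|$, matrices carry the induced operator norm. The linear chained cascade map is $\mathsf{Lin}(x_1,\dots,x_n)=(L_1x_1,\;L_2x_2+C_{2,1}x_1,\;\dots,\;L_nx_n+C_{n,n-1}x_{n-1})$, the nominal map is $\mathsf{Nom}(x_1,\dots,x_n)=(L_1x_1,\dots,L_nx_n)$, and $\mathsf{F}^{\circ t}$ is the $t$-fold iterate. The principal eigenfunction $\psi_{i,s}:\mathbb{C}^{d_i}\to\mathbb{C}$ is $\psi_{i,s}(x_i)=\hat e_s^{*}V_i^{-1}x_i$, where $\hat e_s$ is the $s$-th standard basis vector of $\mathbb{C}^{d_i}$; $\|\psi_{i,s}\|$ is its norm as a linear functional on $(\mathbb{C}^{d_i},\|\cdot\|)$; and $\Psi_{i,s}(x_1,\dots,x_n)=\psi_{i,s}(x_i)$ is its trivial extension to $\mathbb{C}^{d_1}\times\cdots\times\mathbb{C}^{d_n}$. Matrices $D_{i,j}$ ($1\le j\le i\le n$) are defined recursively in $i$: $D_{i,i}=I_{d_i}$; for $i\ge 2$, $1\le j\le i-1$, $[\tilde C_{i,j}]_{\ell,m}=[V_i^{-1}C_{i,i-1}D_{i-1,j}V_j]_{\ell,m}(1-\lambda_{j,m}/\lambda_{i,\ell})^{-1}$ and $D_{i,j}=L_i^{-1}V_i\tilde C_{i,j}V_j^{-1}$. Define $\mathsf{pert}_1(x_1)=x_1$,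 $\mathsf{pert}_i(x_1,\dots,x_i)=x_i+\sum_{j=1}^{i-1}(-1)^{i-1-j}D_{i,j}\mathsf{pert}_j(x_1,\dots,x_j)$ for $i\ge2$, and $\mathsf{pert}(x)=(\mathsf{pert}_1(x_1),\dots,\mathsf{pert}_n(x_1,\dots,x_n))$. *)

theory Defs
  imports "HOL-Analysis.Analysis" "Jordan_Normal_Form.Spectral_Radius"
begin

definition minv :: "complex mat \<Rightarrow> complex mat" where
  "minv A = (SOME B. inverts_mat A B \<and> inverts_mat B A)"

definition diagm :: "nat \<Rightarrow> (nat \<Rightarrow> complex) \<Rightarrow> complex mat" where
  "diagm k lam = mat k k (\<lambda>(l, m). if l = m then lam l else 0)"

definition is_norm_on :: "nat \<Rightarrow> (complex vec \<Rightarrow> real) \<Rightarrow> bool" where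
  "is_norm_on k N \<longleftrightarrow>
     (\<forall>v\<in>carrier_vec k. 0 \<le> N v \<and> (N v = 0 \<longleftrightarrow> v = 0\<^sub>v k)) \<and>
     (\<forall>c. \<forall>v\<in>carrier_vec k. N (c \<cdot>\<^sub>v v) = cmod c * N v) \<and>
     (\<forall>u\<in>carrier_vec k. \<forall>v\<in>carrier_vec k. N (u + v) \<le> N u + N v)"

definition opnorm :: "(complex vec \<Rightarrow> real) \<Rightarrow> (complex vec \<Rightarrow> real) \<Rightarrow> complex mat \<Rightarrow> real" where
  "opnorm Nout Nin A = Sup {Nout (A *\<^sub>v v) | v. v \<in> carrier_vec (dim_col A) \<and> Nin v \<le> 1}"

definition fnorm :: "(complex vec \<Rightarrow> real) \<Rightarrow> nat \<Rightarrow> (complex vec \<Rightarrow> complex) \<Rightarrow> real" where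
  "fnorm N k f = Sup {cmod (f v) | v. v \<in> carrier_vec k \<and> N v \<le> 1}"

(* Points of C^{d_1} x ... x C^{d_n} are represented as x :: nat \<Rightarrow> complex vec,
   component i (1 \<le> i \<le> n) being x i.  C i stands for C_{i,i-1}. *)
definition Lin :: "(nat \<Rightarrow> complex mat) \<Rightarrow> (nat \<Rightarrow> complex mat) \<Rightarrow> (nat \<Rightarrow> complex vec) \<Rightarrow> (nat \<Rightarrow> complex vec)" where
  "Lin L C x = (\<lambda>i. if i \<le> 1 then L i *\<^sub>v x i else L i *\<^sub>v x i + C i *\<^sub>v x (i - 1))"

definition Nom :: "(nat \<Rightarrow> complex mat) \<Rightarrow> (nat \<Rightarrow> complex vec) \<Rightarrow> (nat \<Rightarrow> complex vec)" where
  "Nom L x = (\<lambda>i. L i *\<^sub>v x i)"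

(* psi_{i,s}(y) = e_s^* V_i^{-1} y   (s is 0-based here) *)
definition psi :: "(nat \<Rightarrow> complex mat) \<Rightarrow> nat \<Rightarrow> nat \<Rightarrow> complex vec \<Rightarrow> complex" where
  "psi V i s y = (minv (V i) *\<^sub>v y) $ s"

definition Psi :: "(nat \<Rightarrow> complex mat) \<Rightarrow> nat \<Rightarrow> nat \<Rightarrow> (nat \<Rightarrow> complex vec) \<Rightarrow> complex" where
  "Psi V i s x = psi V i s (x i)"

(* D_{i,j}, recursive in i; lam i l = lambda_{i,l+1} (0-based entry index) *)
fun Dm :: "(nat \<Rightarrow> nat) \<Rightarrow> (nat \<Rightarrow> complex mat) \<Rightarrow> (nat \<Rightarrow> complex mat) \<Rightarrow> (nat \<Rightarrow> complex mat)
           \<Rightarrow> (nat \<Rightarrow> nat \<Rightarrow> complex) \<Rightarrow> nat \<Rightarrow> nat \<Rightarrow> complex mat" where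
  "Dm d L C V lam 0 j = 1\<^sub>m (d 0)"
| "Dm d L C V lam (Suc i) j =
     (if j = Suc i then 1\<^sub>m (d (Suc i))
      else (let Ct = mat (d (Suc i)) (d j)
                  (\<lambda>(l, m). (minv (V (Suc i)) * C (Suc i) * Dm d L C V lam i j * V j) $$ (l, m)
                             * inverse (1 - lam j m / lam (Suc i) l))
            in minv (L (Suc i)) * V (Suc i) * Ct * minv (V j)))"

fun pert :: "(nat \<Rightarrow> nat) \<Rightarrow> (nat \<Rightarrow> complex mat) \<Rightarrow> (nat \<Rightarrow> complex mat) \<Rightarrow> (nat \<Rightarrow> complex mat)
           \<Rightarrow> (nat \<Rightarrow> nat \<Rightarrow> complex) \<Rightarrow> (nat \<Rightarrow> complex vec) \<Rightarrow> nat \<Rightarrow> complex vec" where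
  "pert d L C V lam x i =
     (if i \<le> 1 then x i
      else vec (d i) (\<lambda>l. x i $ l +
             (\<Sum>j\<in>{1..<i}. (-1) ^ (i - 1 - j) * (Dm d L C V lam i j *\<^sub>v pert d L C V lam x j) $ l)))"

definition pertv :: "(nat \<Rightarrow> nat) \<Rightarrow> (nat \<Rightarrow> complex mat) \<Rightarrow> (nat \<Rightarrow> complex mat) \<Rightarrow> (nat \<Rightarrow> complex mat)
           \<Rightarrow> (nat \<Rightarrow> nat \<Rightarrow> complex) \<Rightarrow> (nat \<Rightarrow> complex vec) \<Rightarrow> (nat \<Rightarrow> complex vec)" where
  "pertv d L C V lam x = (\<lambda>i. pert d L C V lam x i)"

end

theory Submission
  imports Defs
begin

no_notation vec_nth (infixl "$" 90)




lemma norm_zero: "is_norm_on k N \<Longrightarrow> N (0\<^sub>v k) = 0"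
  unfolding is_norm_on_def by auto

lemma norm_nonneg: "is_norm_on k N \<Longrightarrow> v \<in> carrier_vec k \<Longrightarrow> 0 \<le> N v"
  unfolding is_norm_on_def by auto

lemma norm_eq0: "is_norm_on k N \<Longrightarrow> v \<in> carrier_vec k \<Longrightarrow> N v = 0 \<Longrightarrow> v = 0\<^sub>v k"
  unfolding is_norm_on_def by auto

lemma norm_smult: "is_norm_on k N \<Longrightarrow> v \<in> carrier_vec k \<Longrightarrow> N (c \<cdot>\<^sub>v v) = cmod c * N v"
  unfolding is_norm_on_def by auto

lemma norm_triangle: "is_norm_on k N \<Longrightarrow> u \<in> carrier_vec k \<Longrightarrow> v \<in> carrier_vec k \<Longrightarrow> N (u + v) \<le> N u + N v"
  unfolding is_norm_on_def by auto

lemma norm_minus: "is_norm_on k N \<Longrightarrow> u \<in> carrier_vec k \<Longrightarrow> v \<in> carrier_vec k \<Longrightarrow> N (u - v) = N (v - u)"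
proof -
  assume N: "is_norm_on k N" and u: "u \<in> carrier_vec k" and v: "v \<in> carrier_vec k"
  have "v - u = (-1) \<cdot>\<^sub>v (u - v)" using u v by (intro eq_vecI) auto
  then show ?thesis using norm_smult[OF N, of "u - v" "-1"] u v by simp
qed

lemma norm_upper_aux:
  assumes N: "is_norm_on k N"
  shows "j \<le> k \<Longrightarrow> v \<in> carrier_vec k \<Longrightarrow> (\<forall>l. j \<le> l \<longrightarrow> l < k \<longrightarrow> v $ l = 0) \<Longrightarrow>
     N v \<le> (\<Sum>l<j. cmod (v $ l) * N (unit_vec k l))"
proof (induction j arbitrary: v)
  case 0
  then have "v = 0\<^sub>v k" by (intro eq_vecI) auto
  then show ?case using norm_zero[OF N] by simp
next
  case (Suc j)
  define w where "w = vec k (\<lambda>l. if l = j then 0 else v $ l)"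
  have w: "w \<in> carrier_vec k" unfolding w_def by simp
  have v: "v = w + (v $ j) \<cdot>\<^sub>v unit_vec k j"
    using Suc.prems unfolding w_def by (intro eq_vecI) (auto simp: unit_vec_def)
  have "N v \<le> N w + N ((v $ j) \<cdot>\<^sub>v unit_vec k j)"
    using norm_triangle[OF N w, of "(v $ j) \<cdot>\<^sub>v unit_vec k j"] v by simp
  also have "N ((v $ j) \<cdot>\<^sub>v unit_vec k j) = cmod (v $ j) * N (unit_vec k j)"
    by (rule norm_smult[OF N]) simp
  also have "N w \<le> (\<Sum>l<j. cmod (w $ l) * N (unit_vec k l))"
    using Suc.prems by (intro Suc.IH w) (auto simp: w_def)
  also have "(\<Sum>l<j. cmod (w $ l) * N (unit_vec k l)) = (\<Sum>l<j. cmod (v $ l) * N (unit_vec k l))"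
    using Suc.prems by (intro sum.cong) (auto simp: w_def)
  finally show ?case by simp
qed

lemma norm_upper:
  assumes N: "is_norm_on k N"
  shows "\<exists>M\<ge>0. \<forall>v\<in>carrier_vec k. N v \<le> M * (\<Sum>l<k. cmod (v $ l))"
proof (intro exI[of _ "\<Sum>l<k. N (unit_vec k l)"] conjI ballI)
  show "0 \<le> (\<Sum>l<k. N (unit_vec k l))" using norm_nonneg[OF N] by (intro sum_nonneg) auto
  fix v :: "complex vec" assume v: "v \<in> carrier_vec k"
  have "N v \<le> (\<Sum>l<k. cmod (v $ l) * N (unit_vec k l))"
    using norm_upper_aux[OF N, of k v] v by auto
  also have "\<dots> \<le> (\<Sum>l<k. cmod (v $ l) * (\<Sum>l<k. N (unit_vec k l)))"
  proof (intro sum_mono mult_left_mono)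
    fix l assume "l \<in> {..<k}"
    then show "N (unit_vec k l) \<le> (\<Sum>l<k. N (unit_vec k l))"
      using norm_nonneg[OF N] by (intro member_le_sum) auto
  qed auto
  also have "\<dots> = (\<Sum>l<k. N (unit_vec k l)) * (\<Sum>l<k. cmod (v $ l))"
    by (subst sum_distrib_right[symmetric]) (rule mult.commute)
  finally show "N v \<le> (\<Sum>l<k. N (unit_vec k l)) * (\<Sum>l<k. cmod (v $ l))" .
qed

lemma bw_vec:
  fixes u :: "nat \<Rightarrow> complex vec"
  assumes b: "\<forall>m. \<forall>l<K. cmod (u m $ l) \<le> 1"
  shows "j \<le> K \<Longrightarrow> \<exists>r. strict_mono r \<and> (\<forall>l<j. convergent (\<lambda>m. u (r m) $ l))"
proof (induction j)
  case 0
  show ?case by (intro exI[of _ id]) (auto simp: strict_mono_def)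
next
  case (Suc j)
  then obtain r where r: "strict_mono r" "\<forall>l<j. convergent (\<lambda>m. u (r m) $ l)" by auto
  define f where "f = (\<lambda>m. u (r m) $ j)"
  have "bounded (range f)" unfolding bounded_iff f_def using b Suc.prems
    by (intro exI[of _ 1]) auto
  then obtain a r' where r': "strict_mono r'" "(f \<circ> r') \<longlonglongrightarrow> a"
    using bounded_imp_convergent_subsequence by blast
  show ?case
  proof (intro exI[of _ "r \<circ> r'"] conjI allI impI)
    show "strict_mono (r \<circ> r')" using r(1) r'(1) by (rule strict_mono_o)
    fix l assume l: "l < Suc j"
    show "convergent (\<lambda>m. u ((r \<circ> r') m) $ l)"
    proof (cases "l = j")
      case True
      then show ?thesis using r'(2) unfolding convergent_def f_def by (auto simp: o_def)
    next
      case False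
      then have "l < j" using l by simp
      then obtain b where "(\<lambda>m. u (r m) $ l) \<longlonglongrightarrow> b" using r(2) unfolding convergent_def by auto
      from LIMSEQ_subseq_LIMSEQ[OF this r'(1)] show ?thesis unfolding convergent_def by (auto simp: o_def)
    qed
  qed
qed

lemma norm_lower:
  assumes N: "is_norm_on k N"
  shows "\<exists>c>0. \<forall>v\<in>carrier_vec k. (\<Sum>l<k. cmod (v $ l)) \<le> c * N v"
proof (rule ccontr)
  assume H: "\<not> ?thesis"
  have "\<forall>m::nat. \<exists>v. v \<in> carrier_vec k \<and> (real m + 1) * N v < (\<Sum>l<k. cmod (v $ l))"
  proof
    fix m :: nat
    have "real m + 1 > 0" by simp
    then show "\<exists>v. v \<in> carrier_vec k \<and> (real m + 1) * N v < (\<Sum>l<k. cmod (v $ l))"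
      using H by (meson not_le)
  qed
  then obtain v where v: "\<And>m. v m \<in> carrier_vec k" "\<And>m. (real m + 1) * N (v m) < (\<Sum>l<k. cmod (v m $ l))"
    by metis
  define S where "S m = (\<Sum>l<k. cmod (v m $ l))" for m
  have Spos: "S m > 0" for m
    using v(2)[of m] norm_nonneg[OF N v(1)[of m]] unfolding S_def
    by (smt (verit) mult_nonneg_nonneg of_nat_0_le_iff)
  define u where "u m = complex_of_real (1 / S m) \<cdot>\<^sub>v v m" for m
  have u: "u m \<in> carrier_vec k" for m unfolding u_def using v(1) by simp
  have ucoord: "cmod (u m $ l) = cmod (v m $ l) / S m" if "l < k" for m l
    using that v(1)[of m] Spos[of m] unfolding u_def by (simp add: norm_divide)
  have usum: "(\<Sum>l<k. cmod (u m $ l)) = 1" for m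
  proof -
    have "(\<Sum>l<k. cmod (u m $ l)) = (\<Sum>l<k. cmod (v m $ l) / S m)"
      by (intro sum.cong) (auto simp: ucoord)
    also have "\<dots> = S m / S m" by (simp only: S_def sum_divide_distrib)
    finally show ?thesis using Spos[of m] by simp
  qed
  have ub: "\<forall>m. \<forall>l<k. cmod (u m $ l) \<le> 1"
  proof (intro allI impI)
    fix m l assume l: "l < k"
    have "cmod (u m $ l) \<le> (\<Sum>l<k. cmod (u m $ l))"
      using l by (intro member_le_sum) auto
    then show "cmod (u m $ l) \<le> 1" using usum by simp
  qed
  have uN: "N (u m) \<le> inverse (real (Suc m))" for m
  proof -
    have "N (u m) = N (v m) / S m"
      unfolding u_def using norm_smult[OF N v(1)[of m]] Spos[of m] by (simp add: norm_divide)
    also have "\<dots> \<le> inverse (real (Suc m))"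
      using v(2)[of m] Spos[of m] unfolding S_def[symmetric]
      by (simp add: field_simps)
    finally show ?thesis .
  qed
  obtain r where r: "strict_mono r" "\<forall>l<k. convergent (\<lambda>m. u (r m) $ l)"
    using bw_vec[OF ub, of k] by auto
  define w where "w = vec k (\<lambda>l. lim (\<lambda>m. u (r m) $ l))"
  have w: "w \<in> carrier_vec k" unfolding w_def by simp
  have wlim: "(\<lambda>m. u (r m) $ l) \<longlonglongrightarrow> w $ l" if "l < k" for l
    using r(2) that unfolding w_def by (simp add: convergent_LIMSEQ_iff)
  have "(\<lambda>m. (\<Sum>l<k. cmod (u (r m) $ l))) \<longlonglongrightarrow> (\<Sum>l<k. cmod (w $ l))"
    by (intro tendsto_sum tendsto_norm wlim) auto
  then have "(\<lambda>m. 1) \<longlonglongrightarrow> (\<Sum>l<k. cmod (w $ l))" using usum by simp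
  then have wsum: "(\<Sum>l<k. cmod (w $ l)) = 1" using LIMSEQ_const_iff by metis
  obtain M where M: "M \<ge> 0" "\<forall>v\<in>carrier_vec k. N v \<le> M * (\<Sum>l<k. cmod (v $ l))"
    using norm_upper[OF N] by auto
  define g where "g m = inverse (real (Suc (r m))) + M * (\<Sum>l<k. cmod (w $ l - u (r m) $ l))" for m
  have g0: "g \<longlonglongrightarrow> 0"
  proof -
    have a: "(\<lambda>m. inverse (real (Suc (r m)))) \<longlonglongrightarrow> 0"
      using LIMSEQ_subseq_LIMSEQ[OF LIMSEQ_inverse_real_of_nat r(1)] by (simp add: o_def)
    have "(\<lambda>m. (\<Sum>l<k. cmod (w $ l - u (r m) $ l))) \<longlonglongrightarrow> (\<Sum>l<k. cmod (w $ l - w $ l))"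
      by (intro tendsto_sum tendsto_norm tendsto_diff tendsto_const wlim) auto
    then have b: "(\<lambda>m. (\<Sum>l<k. cmod (w $ l - u (r m) $ l))) \<longlonglongrightarrow> 0" by simp
    show ?thesis unfolding g_def using tendsto_add[OF a tendsto_mult[OF tendsto_const b, of M]] by simp
  qed
  have Nw: "N w \<le> g m" for m
  proof -
    have "N w = N (u (r m) + (w - u (r m)))" using w u[of "r m"] by (intro arg_cong[where f=N] eq_vecI) auto
    also have "\<dots> \<le> N (u (r m)) + N (w - u (r m))" using w u[of "r m"] by (intro norm_triangle[OF N]) auto
    also have "N (w - u (r m)) \<le> M * (\<Sum>l<k. cmod ((w - u (r m)) $ l))" using M w u by auto
    also have "(\<Sum>l<k. cmod ((w - u (r m)) $ l)) = (\<Sum>l<k. cmod (w $ l - u (r m) $ l))"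
      using w u[of "r m"] by (intro sum.cong) auto
    finally show ?thesis using uN[of "r m"] unfolding g_def by simp
  qed
  have "N w \<le> 0" using g0 Nw by (intro LIMSEQ_le_const[OF g0]) auto
  then have "w = 0\<^sub>v k" using norm_nonneg[OF N w] norm_eq0[OF N w] by simp
  then show False using wsum by simp
qed

lemma norm_coord:
  assumes N: "is_norm_on k N"
  shows "\<exists>c>0. \<forall>v\<in>carrier_vec k. \<forall>l<k. cmod (v $ l) \<le> c * N v"
proof -
  obtain c where c: "c > 0" "\<forall>v\<in>carrier_vec k. (\<Sum>l<k. cmod (v $ l)) \<le> c * N v"
    using norm_lower[OF N] by auto
  show ?thesis
  proof (intro exI[of _ c] conjI ballI allI impI)
    fix v :: "complex vec" and l assume v: "v \<in> carrier_vec k" and l: "l < k"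
    have "cmod (v $ l) \<le> (\<Sum>l<k. cmod (v $ l))" using l by (intro member_le_sum) auto
    then show "cmod (v $ l) \<le> c * N v" using c v by fastforce
  qed (use c in auto)
qed





lemma sup_bound:
  assumes N: "is_norm_on k N"
    and hom: "\<forall>c. \<forall>v\<in>carrier_vec k. g (c \<cdot>\<^sub>v v) = cmod c * g v"
    and nn: "\<forall>v\<in>carrier_vec k. 0 \<le> g v"
    and K: "\<forall>v\<in>carrier_vec k. g v \<le> K * N v"
  shows "\<forall>v\<in>carrier_vec k. g v \<le> Sup {g w |w. w \<in> carrier_vec k \<and> N w \<le> 1} * N v"
    "0 \<le> Sup {g w |w. w \<in> carrier_vec k \<and> N w \<le> 1}"
proof -
  define S where "S = {g w |w. w \<in> carrier_vec k \<and> N w \<le> 1}"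
  have g0: "g (0\<^sub>v k) = 0"
  proof -
    have "0 \<cdot>\<^sub>v 0\<^sub>v k = (0\<^sub>v k :: complex vec)" by (intro eq_vecI) auto
    then show ?thesis using hom[rule_format, of "0\<^sub>v k" 0] by simp
  qed
  have S0: "0 \<in> S" unfolding S_def using g0 norm_zero[OF N]
    by (auto intro!: exI[of _ "0\<^sub>v k"])
  have bdd: "bdd_above S"
  proof (rule bdd_aboveI[of _ "\<bar>K\<bar>"])
    fix x assume "x \<in> S"
    then obtain w where w: "w \<in> carrier_vec k" "N w \<le> 1" "x = g w" unfolding S_def by auto
    have "x \<le> K * N w" using K w by auto
    also have "\<dots> \<le> \<bar>K\<bar> * N w" using norm_nonneg[OF N w(1)] by (simp add: mult_right_mono)
    also have "\<dots> \<le> \<bar>K\<bar>" using w(2) by (simp add: mult_left_le)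
    finally show "x \<le> \<bar>K\<bar>" .
  qed
  show "0 \<le> Sup {g w |w. w \<in> carrier_vec k \<and> N w \<le> 1}"
    unfolding S_def[symmetric] using cSup_upper[OF S0 bdd] .
  show "\<forall>v\<in>carrier_vec k. g v \<le> Sup {g w |w. w \<in> carrier_vec k \<and> N w \<le> 1} * N v"
    unfolding S_def[symmetric]
  proof
    fix v :: "complex vec" assume v: "v \<in> carrier_vec k"
    show "g v \<le> Sup S * N v"
    proof (cases "N v = 0")
      case True
      then have "v = 0\<^sub>v k" using norm_eq0[OF N v] by simp
      then show ?thesis using g0 True by simp
    next
      case False
      then have pos: "N v > 0" using norm_nonneg[OF N v] by simp
      define w where "w = complex_of_real (1 / N v) \<cdot>\<^sub>v v"
      have w: "w \<in> carrier_vec k" using v unfolding w_def by simp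
      have Nw: "N w = 1" unfolding w_def using norm_smult[OF N v] pos by (simp add: norm_divide)
      have gw: "g w = g v / N v" unfolding w_def using hom v pos by (simp add: norm_divide)
      have "g w \<in> S" unfolding S_def using w Nw by auto
      then have "g w \<le> Sup S" using cSup_upper[OF _ bdd] by simp
      then show ?thesis using gw pos by (simp add: field_simps)
    qed
  qed
qed

lemma coord_bound:
  assumes A: "A \<in> carrier_mat k' k" and r: "r < k'" and v: "v \<in> carrier_vec k"
  shows "cmod ((A *\<^sub>v v) $ r) \<le> (\<Sum>l<k. cmod (A $$ (r, l)) * cmod (v $ l))"
proof -
  have "(A *\<^sub>v v) $ r = (\<Sum>l<k. A $$ (r, l) * v $ l)"
    using A r v by (auto simp: scalar_prod_def lessThan_atLeast0 intro!: sum.cong)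
  then show ?thesis by (auto intro!: order.trans[OF norm_sum] simp: norm_mult)
qed

lemma mat_lin_bound:
  assumes A: "A \<in> carrier_mat k' k" and r: "r < k'" and N: "is_norm_on k N"
  shows "\<exists>K. \<forall>v\<in>carrier_vec k. cmod ((A *\<^sub>v v) $ r) \<le> K * N v"
proof -
  obtain c where c: "c > 0" "\<forall>v\<in>carrier_vec k. \<forall>l<k. cmod (v $ l) \<le> c * N v"
    using norm_coord[OF N] by auto
  show ?thesis
  proof (intro exI[of _ "(\<Sum>l<k. cmod (A $$ (r, l))) * c"] ballI)
    fix v :: "complex vec" assume v: "v \<in> carrier_vec k"
    have "cmod ((A *\<^sub>v v) $ r) \<le> (\<Sum>l<k. cmod (A $$ (r, l)) * cmod (v $ l))"
      by (rule coord_bound[OF A r v])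
    also have "\<dots> \<le> (\<Sum>l<k. cmod (A $$ (r, l)) * (c * N v))"
      using c v by (intro sum_mono mult_left_mono) auto
    also have "\<dots> = (\<Sum>l<k. cmod (A $$ (r, l))) * c * N v"
      by (simp add: sum_distrib_right mult.assoc)
    finally show "cmod ((A *\<^sub>v v) $ r) \<le> (\<Sum>l<k. cmod (A $$ (r, l))) * c * N v" .
  qed
qed

lemma mat_norm_bound:
  assumes A: "A \<in> carrier_mat k' k" and N: "is_norm_on k N" and N': "is_norm_on k' N'"
  shows "\<exists>K. \<forall>v\<in>carrier_vec k. N' (A *\<^sub>v v) \<le> K * N v"
proof -
  obtain M where M: "M \<ge> 0" "\<forall>v\<in>carrier_vec k'. N' v \<le> M * (\<Sum>l<k'. cmod (v $ l))"
    using norm_upper[OF N'] by auto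
  have "\<forall>r\<in>{..<k'}. \<exists>K. \<forall>v\<in>carrier_vec k. cmod ((A *\<^sub>v v) $ r) \<le> K * N v"
    using mat_lin_bound[OF A _ N] by auto
  then obtain K where K: "\<And>r v. r < k' \<Longrightarrow> v \<in> carrier_vec k \<Longrightarrow> cmod ((A *\<^sub>v v) $ r) \<le> K r * N v"
    by (metis lessThan_iff)
  show ?thesis
  proof (intro exI[of _ "M * (\<Sum>r<k'. K r)"] ballI)
    fix v :: "complex vec" assume v: "v \<in> carrier_vec k"
    have "N' (A *\<^sub>v v) \<le> M * (\<Sum>r<k'. cmod ((A *\<^sub>v v) $ r))"
      using M(2) mult_mat_vec_carrier[OF A v] by blast
    also have "\<dots> \<le> M * (\<Sum>r<k'. K r * N v)"
      using K v M by (intro mult_left_mono sum_mono) auto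
    also have "\<dots> = M * (\<Sum>r<k'. K r) * N v" by (simp add: sum_distrib_right mult.assoc)
    finally show "N' (A *\<^sub>v v) \<le> M * (\<Sum>r<k'. K r) * N v" .
  qed
qed

lemma opnorm_bound:
  assumes A: "A \<in> carrier_mat k' k" and N: "is_norm_on k N" and N': "is_norm_on k' N'"
  shows "\<forall>v\<in>carrier_vec k. N' (A *\<^sub>v v) \<le> opnorm N' N A * N v"
    "0 \<le> opnorm N' N A"
proof -
  obtain K where K: "\<forall>v\<in>carrier_vec k. N' (A *\<^sub>v v) \<le> K * N v"
    using mat_norm_bound[OF A N N'] by auto
  have hom: "\<forall>c. \<forall>v\<in>carrier_vec k. N' (A *\<^sub>v (c \<cdot>\<^sub>v v)) = cmod c * N' (A *\<^sub>v v)"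
    using A by (auto simp: mult_mat_vec norm_smult[OF N'])
  have nn: "\<forall>v\<in>carrier_vec k. 0 \<le> N' (A *\<^sub>v v)" using A norm_nonneg[OF N'] by auto
  have dc: "dim_col A = k" using A by auto
  note sb = sup_bound[OF N, of "\<lambda>v. N' (A *\<^sub>v v)", OF hom nn K]
  show "\<forall>v\<in>carrier_vec k. N' (A *\<^sub>v v) \<le> opnorm N' N A * N v"
    using sb(1) unfolding opnorm_def dc .
  show "0 \<le> opnorm N' N A" using sb(2) unfolding opnorm_def dc .
qed

lemma fnorm_bound:
  assumes B: "B \<in> carrier_mat k k" and s: "s < k" and N: "is_norm_on k N"
  shows "\<forall>v\<in>carrier_vec k. cmod ((B *\<^sub>v v) $ s) \<le> fnorm N k (\<lambda>v. (B *\<^sub>v v) $ s) * N v"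
proof -
  obtain K where K: "\<forall>v\<in>carrier_vec k. cmod ((B *\<^sub>v v) $ s) \<le> K * N v"
    using mat_lin_bound[OF B s N] by auto
  have hom: "\<forall>c. \<forall>v\<in>carrier_vec k. cmod ((B *\<^sub>v (c \<cdot>\<^sub>v v)) $ s) = cmod c * cmod ((B *\<^sub>v v) $ s)"
    using B s by (auto simp: mult_mat_vec norm_mult)
  note sb = sup_bound[OF N, of "\<lambda>v. cmod ((B *\<^sub>v v) $ s)", OF hom _ K]
  show ?thesis using sb(1) unfolding fnorm_def by simp
qed

lemma fnorm_nonneg:
  assumes B: "B \<in> carrier_mat k k" and s: "s < k" and N: "is_norm_on k N"
  shows "0 \<le> fnorm N k (\<lambda>v. (B *\<^sub>v v) $ s)"
proof -
  obtain K where K: "\<forall>v\<in>carrier_vec k. cmod ((B *\<^sub>v v) $ s) \<le> K * N v"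
    using mat_lin_bound[OF B s N] by auto
  have hom: "\<forall>c. \<forall>v\<in>carrier_vec k. cmod ((B *\<^sub>v (c \<cdot>\<^sub>v v)) $ s) = cmod c * cmod ((B *\<^sub>v v) $ s)"
    using B s by (auto simp: mult_mat_vec norm_mult)
  note sb = sup_bound[OF N, of "\<lambda>v. cmod ((B *\<^sub>v v) $ s)", OF hom _ K]
  show ?thesis using sb(2) unfolding fnorm_def by simp
qed





lemma minv:
  assumes A: "A \<in> carrier_mat k k" and inv: "invertible_mat A"
  shows "minv A \<in> carrier_mat k k" "A * minv A = 1\<^sub>m k" "minv A * A = 1\<^sub>m k"
proof -
  have ex: "\<exists>B. inverts_mat A B \<and> inverts_mat B A" using inv unfolding invertible_mat_def by auto
  have B: "inverts_mat A (minv A) \<and> inverts_mat (minv A) A"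
    unfolding minv_def by (rule someI_ex[OF ex])
  have 1: "A * minv A = 1\<^sub>m k" using B A unfolding inverts_mat_def by auto
  have 2: "minv A * A = 1\<^sub>m (dim_row (minv A))" using B unfolding inverts_mat_def by auto
  have c: "dim_col (minv A) = k" using arg_cong[OF 1, of dim_col] by simp
  have r: "dim_row (minv A) = k" using arg_cong[OF 2, of dim_col] A by simp
  show "minv A \<in> carrier_mat k k" using c r by auto
  show "A * minv A = 1\<^sub>m k" by (rule 1)
  show "minv A * A = 1\<^sub>m k" using 2 r by simp
qed

lemma diag_mult:
  assumes A: "A \<in> carrier_mat a b" and l: "l < a" and m: "m < b"
  shows "(diagm a f * A) $$ (l, m) = f l * A $$ (l, m)"
proof -
  have "(diagm a f * A) $$ (l, m) = (\<Sum>x\<in>{0..<a}. (if l = x then f l else 0) * A $$ (x, m))"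
    using A l m by (simp add: diagm_def scalar_prod_def)
  also have "\<dots> = (\<Sum>x\<in>{0..<a}. if x = l then f l * A $$ (l, m) else 0)"
    by (intro sum.cong) auto
  also have "\<dots> = f l * A $$ (l, m)" using l by simp
  finally show ?thesis .
qed

lemma mult_diag:
  assumes A: "A \<in> carrier_mat a b" and l: "l < a" and m: "m < b"
  shows "(A * diagm b f) $$ (l, m) = A $$ (l, m) * f m"
proof -
  have "(A * diagm b f) $$ (l, m) = (\<Sum>x\<in>{0..<b}. A $$ (l, x) * (if x = m then f x else 0))"
    using A l m by (simp add: diagm_def scalar_prod_def)
  also have "\<dots> = (\<Sum>x\<in>{0..<b}. if x = m then A $$ (l, m) * f m else 0)"
    by (intro sum.cong) auto
  also have "\<dots> = A $$ (l, m) * f m" using m by simp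
  finally show ?thesis .
qed

lemma diagm_carrier[simp]: "diagm k f \<in> carrier_mat k k"
  unfolding diagm_def by simp

lemma eig:
  assumes L: "L \<in> carrier_mat k k" and V: "V \<in> carrier_mat k k" and Vi: "invertible_mat V"
    and LV: "L * V = V * diagm k lam" and l: "l < k"
  shows "lam l \<in> spectrum L" "invertible_mat L \<Longrightarrow> lam l \<noteq> 0"
proof -
  define w where "w = V *\<^sub>v unit_vec k l"
  have w: "w \<in> carrier_vec k" unfolding w_def using V by simp
  have De: "diagm k lam *\<^sub>v unit_vec k l = lam l \<cdot>\<^sub>v unit_vec k l"
  proof (intro eq_vecI)
    fix i assume i: "i < dim_vec (lam l \<cdot>\<^sub>v unit_vec k l)"
    then have i: "i < k" by simp
    have "(diagm k lam *\<^sub>v unit_vec k l) $ i = (\<Sum>x\<in>{0..<k}. (if i = x then lam i else 0) * (if x = l then 1 else 0))"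
      using i l by (simp add: diagm_def scalar_prod_def unit_vec_def)
    also have "\<dots> = (\<Sum>x\<in>{0..<k}. if x = l then (if i = l then lam l else 0) else 0)"
      by (intro sum.cong) auto
    also have "\<dots> = (lam l \<cdot>\<^sub>v unit_vec k l) $ i" using i l by (simp add: unit_vec_def)
    finally show "(diagm k lam *\<^sub>v unit_vec k l) $ i = (lam l \<cdot>\<^sub>v unit_vec k l) $ i" .
  qed (simp add: diagm_def)
  have Lw: "L *\<^sub>v w = lam l \<cdot>\<^sub>v w"
  proof -
    have "L *\<^sub>v w = (L * V) *\<^sub>v unit_vec k l" unfolding w_def using L V by simp
    also have "\<dots> = V *\<^sub>v (diagm k lam *\<^sub>v unit_vec k l)" unfolding LV by (rule assoc_mult_mat_vec[OF V diagm_carrier]) simp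
    also have "\<dots> = lam l \<cdot>\<^sub>v w" unfolding De w_def using V by (simp add: mult_mat_vec)
    finally show ?thesis .
  qed
  have wnz: "w \<noteq> 0\<^sub>v k"
  proof
    assume "w = 0\<^sub>v k"
    then have "minv V *\<^sub>v w = 0\<^sub>v k" using minv[OF V Vi] by auto
    moreover have "minv V *\<^sub>v w = unit_vec k l"
      unfolding w_def using minv[OF V Vi] V
      by (simp flip: assoc_mult_mat_vec[of _ k k _ k])
    ultimately have "unit_vec k l = (0\<^sub>v k :: complex vec)" by simp
    then have "unit_vec k l $ l = (0\<^sub>v k :: complex vec) $ l" by simp
    then show False using l by simp
  qed
  show "lam l \<in> spectrum L"
    unfolding spectrum_def eigenvalue_def eigenvector_def using L w wnz Lw by auto
  assume Li: "invertible_mat L"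
  show "lam l \<noteq> 0"
  proof
    assume "lam l = 0"
    then have "L *\<^sub>v w = 0\<^sub>v k" using Lw w by auto
    then have "minv L *\<^sub>v (L *\<^sub>v w) = 0\<^sub>v k" using minv[OF L Li] by auto
    moreover have "minv L *\<^sub>v (L *\<^sub>v w) = w" using minv[OF L Li] L w
      by (simp flip: assoc_mult_mat_vec[of _ k k _ k])
    ultimately show False using wnz by simp
  qed
qed

lemma assoc': fixes A :: "complex mat" shows "dim_col A = dim_row B \<Longrightarrow> dim_col B = dim_row C \<Longrightarrow> A * B * C = A * (B * C)"
  by (rule assoc_mult_mat[of A "dim_row A" "dim_col A" B "dim_col B" C "dim_col C"]) auto

lemma one_l': fixes A :: "complex mat" shows "dim_row A = n \<Longrightarrow> 1\<^sub>m n * A = A"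
  by (rule left_mult_one_mat[of A n "dim_col A"]) auto

lemma one_r': fixes A :: "complex mat" shows "dim_col A = n \<Longrightarrow> A * 1\<^sub>m n = A"
  by (rule right_mult_one_mat[of A "dim_row A" n]) auto

lemma cancel': fixes A :: "complex mat" shows "A * B = 1\<^sub>m n \<Longrightarrow> dim_col A = dim_row B \<Longrightarrow> dim_col B = dim_row X \<Longrightarrow> dim_row X = n
   \<Longrightarrow> A * (B * X) = X"
  by (metis assoc' one_l')

lemma diag_inv:
  assumes nz: "\<forall>l<a. f l \<noteq> 0"
  shows "diagm a f * diagm a (\<lambda>l. inverse (f l)) = 1\<^sub>m a"
proof (rule eq_matI)
  fix i j assume i: "i < dim_row (1\<^sub>m a :: complex mat)" and j: "j < dim_col (1\<^sub>m a :: complex mat)"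
  then have i: "i < a" and j: "j < a" by auto
  have "(diagm a f * diagm a (\<lambda>l. inverse (f l))) $$ (i, j) = f i * diagm a (\<lambda>l. inverse (f l)) $$ (i, j)"
    by (rule diag_mult[OF diagm_carrier i j])
  then show "(diagm a f * diagm a (\<lambda>l. inverse (f l))) $$ (i, j) = 1\<^sub>m a $$ (i, j)"
    using nz i j by (simp add: diagm_def)
qed (auto simp: diagm_def)

lemma sylv:
  fixes Li Lj Vi Vj Ci D' :: "complex mat"
  assumes Li: "Li \<in> carrier_mat a a" and Vi: "Vi \<in> carrier_mat a a"
    and Lj: "Lj \<in> carrier_mat b b" and Vj: "Vj \<in> carrier_mat b b"
    and Ci: "Ci \<in> carrier_mat a c" and D': "D' \<in> carrier_mat c b"
    and iLi: "invertible_mat Li" and iVi: "invertible_mat Vi" and iVj: "invertible_mat Vj"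
    and LVi: "Li * Vi = Vi * diagm a li" and LVj: "Lj * Vj = Vj * diagm b lj"
    and nz: "\<forall>l<a. li l \<noteq> 0" and ne: "\<forall>l<a. \<forall>m<b. li l \<noteq> lj m"
  defines "M \<equiv> minv Vi * Ci * D' * Vj"
  defines "Ct \<equiv> mat a b (\<lambda>(l, m). M $$ (l, m) * inverse (1 - lj m / li l))"
  defines "D \<equiv> minv Li * Vi * Ct * minv Vj"
  shows "Li * D - D * Lj = Ci * D'"
proof -
  note mLi = minv[OF Li iLi] and mVi = minv[OF Vi iVi] and mVj = minv[OF Vj iVj]
  define Ai where "Ai = diagm a li"
  define Bi where "Bi = diagm a (\<lambda>l. inverse (li l))"
  define Aj where "Aj = diagm b lj"
  have Ai: "Ai \<in> carrier_mat a a" and Bi: "Bi \<in> carrier_mat a a" and Aj: "Aj \<in> carrier_mat b b"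
    unfolding Ai_def Bi_def Aj_def by auto
  have AB: "Ai * Bi = 1\<^sub>m a" unfolding Ai_def Bi_def by (rule diag_inv[OF nz])
  have M: "M \<in> carrier_mat a b" unfolding M_def using mVi Ci D' Vj by auto
  have Ct: "Ct \<in> carrier_mat a b" unfolding Ct_def by simp
  note dims = carrier_matD[OF Li] carrier_matD[OF Vi] carrier_matD[OF Lj] carrier_matD[OF Vj]
    carrier_matD[OF Ci] carrier_matD[OF D'] carrier_matD[OF mLi(1)] carrier_matD[OF mVi(1)]
    carrier_matD[OF mVj(1)] carrier_matD[OF Ai] carrier_matD[OF Bi] carrier_matD[OF Aj]
    carrier_matD[OF M] carrier_matD[OF Ct]
  note ms = assoc' one_l' one_r' dims
  have LB: "minv Li * Vi = Vi * Bi"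
  proof -
    have "minv Li * Vi = minv Li * (Vi * (Ai * Bi))" using AB by (simp add: ms)
    also have "\<dots> = minv Li * (Li * Vi * Bi)" unfolding LVi Ai_def[symmetric] by (simp add: ms)
    also have "\<dots> = minv Li * (Li * (Vi * Bi))" by (simp add: ms)
    also have "\<dots> = Vi * Bi" by (rule cancel'[OF mLi(3)]) (simp_all add: ms)
    finally show ?thesis .
  qed
  have LA: "minv Vj * Lj = Aj * minv Vj"
  proof -
    have "minv Vj * Lj = minv Vj * (Lj * (Vj * minv Vj))" using mVj by (simp add: ms)
    also have "\<dots> = minv Vj * ((Lj * Vj) * minv Vj)" by (simp add: ms)
    also have "\<dots> = minv Vj * (Vj * (Aj * minv Vj))" unfolding LVj Aj_def[symmetric] by (simp add: ms)
    also have "\<dots> = Aj * minv Vj" by (rule cancel'[OF mVj(3)]) (simp_all add: ms)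
    finally show ?thesis .
  qed
  have entry: "Ct - Bi * Ct * Aj = M"
  proof (rule eq_matI)
    fix l m assume l: "l < dim_row M" and m: "m < dim_col M"
    then have l: "l < a" and m: "m < b" using M by auto
    have BC: "Bi * Ct \<in> carrier_mat a b" using Bi Ct by auto
    have "(Bi * Ct * Aj) $$ (l, m) = (Bi * Ct) $$ (l, m) * lj m"
      unfolding Aj_def by (rule mult_diag[OF BC l m])
    also have "(Bi * Ct) $$ (l, m) = inverse (li l) * Ct $$ (l, m)"
      unfolding Bi_def by (rule diag_mult[OF Ct l m])
    finally have e: "(Bi * Ct * Aj) $$ (l, m) = inverse (li l) * Ct $$ (l, m) * lj m" .
    have "li l - lj m \<noteq> 0" using ne l m by auto
    moreover have "li l \<noteq> 0" using nz l by auto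
    ultimately show "(Ct - Bi * Ct * Aj) $$ (l, m) = M $$ (l, m)"
      using l m Ct Bi Aj e unfolding Ct_def by (auto simp: field_simps)
  qed (use M Ct Bi Aj in auto)
  have "Li * D = Vi * (Ct * minv Vj)"
  proof -
    have "Li * D = Li * (minv Li * (Vi * (Ct * minv Vj)))" unfolding D_def by (simp add: ms)
    also have "\<dots> = Vi * (Ct * minv Vj)" by (rule cancel'[OF mLi(2)]) (simp_all add: ms)
    finally show ?thesis .
  qed
  moreover have "D * Lj = Vi * ((Bi * Ct * Aj) * minv Vj)"
  proof -
    have "D * Lj = (minv Li * Vi) * (Ct * (minv Vj * Lj))" unfolding D_def by (simp add: ms)
    also have "\<dots> = Vi * ((Bi * Ct * Aj) * minv Vj)" unfolding LB LA by (simp add: ms)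
    finally show ?thesis .
  qed
  ultimately have "Li * D - D * Lj = Vi * (Ct * minv Vj) - Vi * ((Bi * Ct * Aj) * minv Vj)" by simp
  also have "\<dots> = Vi * ((Ct - Bi * Ct * Aj) * minv Vj)"
  proof -
    have BCA: "Bi * Ct * Aj \<in> carrier_mat a b" using Bi Ct Aj by auto
    have X1: "Ct * minv Vj \<in> carrier_mat a b" using Ct mVj by auto
    have X2: "(Bi * Ct * Aj) * minv Vj \<in> carrier_mat a b" using BCA mVj by auto
    show ?thesis
      unfolding minus_mult_distrib_mat[OF Ct BCA mVj(1)] mult_minus_distrib_mat[OF Vi X1 X2] ..
  qed
  also have "\<dots> = Vi * (M * minv Vj)" unfolding entry ..
  also have "\<dots> = Vi * (minv Vi * (Ci * (D' * (Vj * minv Vj))))" unfolding M_def by (simp add: ms)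
  also have "\<dots> = Ci * (D' * (Vj * minv Vj))" by (rule cancel'[OF mVi(2)]) (simp_all add: ms)
  also have "\<dots> = Ci * D'" using mVj by (simp add: ms)
  finally show ?thesis .
qed





lemma matvec_coord:
  assumes A: "A \<in> carrier_mat k' k" and r: "r < k'" and v: "v \<in> carrier_vec k"
  shows "(A *\<^sub>v v) $ r = (\<Sum>l<k. A $$ (r, l) * v $ l)"
  using A r v by (auto simp: scalar_prod_def lessThan_atLeast0 intro!: sum.cong)

lemma matvec_lin:
  fixes A :: "complex mat"
  assumes A: "A \<in> carrier_mat k' k" and u: "u \<in> carrier_vec k" and X: "\<forall>j\<in>J. X j \<in> carrier_vec k"
    and J: "finite J" and r: "r < k'"
  shows "(A *\<^sub>v vec k (\<lambda>l. u $ l + (\<Sum>j\<in>J. c j * X j $ l))) $ r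
       = (A *\<^sub>v u) $ r + (\<Sum>j\<in>J. c j * (A *\<^sub>v X j) $ r)"
proof -
  have "(A *\<^sub>v vec k (\<lambda>l. u $ l + (\<Sum>j\<in>J. c j * X j $ l))) $ r
      = (\<Sum>l<k. A $$ (r, l) * (u $ l + (\<Sum>j\<in>J. c j * X j $ l)))"
    by (rule trans[OF matvec_coord[OF A r]]) auto
  also have "\<dots> = (\<Sum>l<k. A $$ (r, l) * u $ l) + (\<Sum>j\<in>J. c j * (\<Sum>l<k. A $$ (r, l) * X j $ l))"
    by (simp add: distrib_left sum.distrib sum_distrib_left sum.swap[of _ J]) (simp add: mult.left_commute)
  also have "\<dots> = (A *\<^sub>v u) $ r + (\<Sum>j\<in>J. c j * (A *\<^sub>v X j) $ r)"
    using matvec_coord[OF A r] u X by simp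
  finally show ?thesis .
qed

lemma norm_vsum:
  assumes N: "is_norm_on k N" and J: "finite J"
  shows "\<forall>j\<in>J. X j \<in> carrier_vec k \<Longrightarrow>
    N (vec k (\<lambda>l. \<Sum>j\<in>J. c j * X j $ l)) \<le> (\<Sum>j\<in>J. cmod (c j) * N (X j))"
  using J
proof (induction J rule: finite_induct)
  case empty
  have "vec k (\<lambda>l. 0) = (0\<^sub>v k :: complex vec)" by (intro eq_vecI) auto
  then show ?case using norm_zero[OF N] by simp
next
  case (insert a F)
  have Xa: "X a \<in> carrier_vec k" using insert by auto
  have "vec k (\<lambda>l. \<Sum>j\<in>insert a F. c j * X j $ l) = c a \<cdot>\<^sub>v X a + vec k (\<lambda>l. \<Sum>j\<in>F. c j * X j $ l)"
    using insert Xa by (intro eq_vecI) auto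
  then have "N (vec k (\<lambda>l. \<Sum>j\<in>insert a F. c j * X j $ l))
      \<le> N (c a \<cdot>\<^sub>v X a) + N (vec k (\<lambda>l. \<Sum>j\<in>F. c j * X j $ l))"
    using norm_triangle[OF N, of "c a \<cdot>\<^sub>v X a"] Xa by simp
  also have "\<dots> \<le> cmod (c a) * N (X a) + (\<Sum>j\<in>F. cmod (c j) * N (X j))"
    using insert norm_smult[OF N Xa] by simp
  finally show ?case using insert by simp
qed

locale cascade =
  fixes n :: nat and d :: "nat \<Rightarrow> nat"
    and L C V :: "nat \<Rightarrow> complex mat" and lam :: "nat \<Rightarrow> nat \<Rightarrow> complex"
    and N :: "nat \<Rightarrow> complex vec \<Rightarrow> real"
  assumes n: "n \<ge> 1"
    and d: "\<forall>i\<in>{1..n}. d i \<ge> 1"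
    and norms: "\<forall>i\<in>{1..n}. is_norm_on (d i) (N i)"
    and Ldim: "\<forall>i\<in>{1..n}. L i \<in> carrier_mat (d i) (d i)"
    and Cdim: "\<forall>i\<in>{2..n}. C i \<in> carrier_mat (d i) (d (i - 1))"
    and Vdim: "\<forall>i\<in>{1..n}. V i \<in> carrier_mat (d i) (d i)"
    and Linv: "\<forall>i\<in>{1..n}. invertible_mat (L i)"
    and Vinv: "\<forall>i\<in>{1..n}. invertible_mat (V i)"
    and diag: "\<forall>i\<in>{1..n}. L i * V i = V i * diagm (d i) (lam i)"
    and spec: "\<forall>i\<in>{1..n}. \<forall>j\<in>{1..n}. i \<noteq> j \<longrightarrow> spectrum (L i) \<inter> spectrum (L j) = {}"
    and mono: "\<forall>i\<in>{1..<n}. opnorm (N i) (N i) (L i) < opnorm (N (i + 1)) (N (i + 1)) (L (i + 1))"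
begin

abbreviation "D \<equiv> Dm d L C V lam"

lemma Dcar: "1 \<le> j \<Longrightarrow> j \<le> i \<Longrightarrow> i \<le> n \<Longrightarrow> D i j \<in> carrier_mat (d i) (d j)"
proof (induction i)
  case 0
  then show ?case by simp
next
  case (Suc i)
  show ?case
  proof (cases "j = Suc i")
    case True
    then show ?thesis by simp
  next
    case False
    then have ji: "j \<le> i" "1 \<le> i" using Suc.prems by auto
    have IH: "D i j \<in> carrier_mat (d i) (d j)" using Suc ji by auto
    have Li: "L (Suc i) \<in> carrier_mat (d (Suc i)) (d (Suc i))" using Ldim Suc.prems by auto
    have Vi: "V (Suc i) \<in> carrier_mat (d (Suc i)) (d (Suc i))" using Vdim Suc.prems by auto
    have Vj: "V j \<in> carrier_mat (d j) (d j)" using Vdim Suc.prems ji by auto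
    note mLi = minv[OF Li] and mVj = minv[OF Vj]
    have "invertible_mat (L (Suc i))" "invertible_mat (V j)" using Linv Vinv Suc.prems ji by auto
    then show ?thesis using False mLi mVj Vi by (auto simp: Let_def)
  qed
qed

lemma Ddiag: "1 \<le> i \<Longrightarrow> D i i = 1\<^sub>m (d i)"
  by (cases i) auto

lemma lam_props:
  assumes i: "i \<in> {1..n}" and l: "l < d i"
  shows "lam i l \<in> spectrum (L i)" "lam i l \<noteq> 0"
  using eig[of "L i" "d i" "V i" "lam i" l] i l Ldim Vdim Vinv diag Linv by auto

lemma Dsylv:
  assumes i: "2 \<le> i" "i \<le> n" and j: "1 \<le> j" "j < i"
  shows "L i * D i j - D i j * L j = C i * D (i - 1) j"
proof -
  obtain i' where i': "i = Suc i'" using i by (cases i) auto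
  have ji: "j \<noteq> Suc i'" using j i' by simp
  have nz: "\<forall>l<d i. lam i l \<noteq> 0" using lam_props(2) i by auto
  have ne: "\<forall>l<d i. \<forall>m<d j. lam i l \<noteq> lam j m"
  proof (intro allI impI)
    fix l m assume l: "l < d i" and m: "m < d j"
    have "lam i l \<in> spectrum (L i)" using lam_props(1) i l by auto
    moreover have "lam j m \<in> spectrum (L j)" using lam_props(1)[of j m] i j m by auto
    moreover have "spectrum (L i) \<inter> spectrum (L j) = {}" using spec i j by auto
    ultimately show "lam i l \<noteq> lam j m" by auto
  qed
  have D': "D i' j \<in> carrier_mat (d i') (d j)" using Dcar[of j i'] i j i' by auto
  have "C i \<in> carrier_mat (d i) (d (i - 1))" using Cdim i by auto
  then have Ci: "C i \<in> carrier_mat (d i) (d i')" using i' by simp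
  have "L i * (minv (L i) * V i * mat (d i) (d j)
          (\<lambda>(l, m). (minv (V i) * C i * D i' j * V j) $$ (l, m) * inverse (1 - lam j m / lam i l)) * minv (V j))
       - (minv (L i) * V i * mat (d i) (d j)
          (\<lambda>(l, m). (minv (V i) * C i * D i' j * V j) $$ (l, m) * inverse (1 - lam j m / lam i l)) * minv (V j))
          * L j = C i * D i' j"
    by (rule sylv[OF _ _ _ _ _ D']) (use i j Ldim Vdim Ci Linv Vinv diag nz ne i' in auto)
  then show ?thesis using i' ji by (simp add: Let_def)
qed

lemma Dsylv_vec:
  assumes i: "2 \<le> i" "i \<le> n" and j: "1 \<le> j" "j < i" and y: "y \<in> carrier_vec (d j)" and r: "r < d i"
  shows "(L i *\<^sub>v (D i j *\<^sub>v y)) $ r = (D i j *\<^sub>v (L j *\<^sub>v y)) $ r + (C i *\<^sub>v (D (i - 1) j *\<^sub>v y)) $ r"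
proof -
  have Li: "L i \<in> carrier_mat (d i) (d i)" using Ldim i by auto
  have Lj: "L j \<in> carrier_mat (d j) (d j)" using Ldim i j by auto
  have Ci: "C i \<in> carrier_mat (d i) (d (i - 1))" using Cdim i by auto
  have Dij: "D i j \<in> carrier_mat (d i) (d j)" using Dcar i j by auto
  have D': "D (i - 1) j \<in> carrier_mat (d (i - 1)) (d j)" using Dcar[of j "i - 1"] i j by auto
  have "(L i * D i j - D i j * L j) *\<^sub>v y = (C i * D (i - 1) j) *\<^sub>v y" using Dsylv[OF i j] by simp
  then have "(L i * D i j) *\<^sub>v y - (D i j * L j) *\<^sub>v y = (C i * D (i - 1) j) *\<^sub>v y"
    using Li Lj Dij y by (subst (asm) minus_mult_distrib_mat_vec) auto
  then have "L i *\<^sub>v (D i j *\<^sub>v y) - D i j *\<^sub>v (L j *\<^sub>v y) = C i *\<^sub>v (D (i - 1) j *\<^sub>v y)"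
    using Li Lj Dij y Ci D' by simp
  then have "(L i *\<^sub>v (D i j *\<^sub>v y) - D i j *\<^sub>v (L j *\<^sub>v y)) $ r = (C i *\<^sub>v (D (i - 1) j *\<^sub>v y)) $ r"
    by simp
  moreover have "(L i *\<^sub>v (D i j *\<^sub>v y) - D i j *\<^sub>v (L j *\<^sub>v y)) $ r
     = (L i *\<^sub>v (D i j *\<^sub>v y)) $ r - (D i j *\<^sub>v (L j *\<^sub>v y)) $ r"
    using r Li Lj Dij y by (intro index_minus_vec) auto
  ultimately show ?thesis by (metis diff_eq_eq add.commute)
qed

end





lemma sign_step: "j < (i::nat) \<Longrightarrow> (-1::complex) ^ (i - j) = - ((-1) ^ (i - 1 - j))"
proof -
  assume "j < i"
  then have "i - j = Suc (i - 1 - j)" by arith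
  then show ?thesis by simp
qed

declare pert.simps[simp del]

context cascade begin

definition Tm :: "(nat \<Rightarrow> complex vec) \<Rightarrow> nat \<Rightarrow> complex vec" where
  "Tm y i = vec (d i) (\<lambda>l. y i $ l + (\<Sum>j\<in>{1..<i}. (-1) ^ (i - j) * (D i j *\<^sub>v y j) $ l))"

abbreviation "P x \<equiv> pert d L C V lam x"

lemma pert_car: "j \<in> {1..n} \<Longrightarrow> x j \<in> carrier_vec (d j) \<Longrightarrow> P x j \<in> carrier_vec (d j)"
  by (subst pert.simps) auto

lemma pert_eq: "2 \<le> i \<Longrightarrow> P x i = vec (d i) (\<lambda>l. x i $ l +
             (\<Sum>j\<in>{1..<i}. (-1) ^ (i - 1 - j) * (D i j *\<^sub>v P x j) $ l))"
  by (subst pert.simps) auto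

lemma pert1: "P x 1 = x 1"
  by (subst pert.simps) auto

lemma Tm1: "y 1 \<in> carrier_vec (d 1) \<Longrightarrow> Tm y 1 = y 1"
  unfolding Tm_def by (intro eq_vecI) auto

lemma Tm_car: "Tm y i \<in> carrier_vec (d i)"
  unfolding Tm_def by simp

lemma Tm_pert:
  assumes x: "\<forall>k\<in>{1..n}. x k \<in> carrier_vec (d k)" and i: "i \<in> {1..n}"
  shows "Tm (pertv d L C V lam x) i = x i"
proof (cases "i = 1")
  case True
  then show ?thesis using Tm1[of "pertv d L C V lam x"] pert1[of x] x n
    unfolding pertv_def by auto
next
  case False
  then have i2: "2 \<le> i" using i by auto
  have xi: "x i \<in> carrier_vec (d i)" using x i by auto
  show ?thesis
  proof (rule eq_vecI)
    fix l assume "l < dim_vec (x i)"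
    then have l: "l < d i" using xi by auto
    have "Tm (pertv d L C V lam x) i $ l
        = P x i $ l + (\<Sum>j\<in>{1..<i}. (-1) ^ (i - j) * (D i j *\<^sub>v P x j) $ l)"
      unfolding Tm_def pertv_def using l by simp
    also have "P x i $ l = x i $ l + (\<Sum>j\<in>{1..<i}. (-1) ^ (i - 1 - j) * (D i j *\<^sub>v P x j) $ l)"
      using pert_eq[OF i2, of x] l by simp
    finally have "Tm (pertv d L C V lam x) i $ l = x i $ l +
       ((\<Sum>j\<in>{1..<i}. (-1) ^ (i - 1 - j) * (D i j *\<^sub>v P x j) $ l) +
        (\<Sum>j\<in>{1..<i}. (-1) ^ (i - j) * (D i j *\<^sub>v P x j) $ l))" by (simp add: add.assoc)
    also have "(\<Sum>j\<in>{1..<i}. (-1) ^ (i - 1 - j) * (D i j *\<^sub>v P x j) $ l) +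
        (\<Sum>j\<in>{1..<i}. (-1) ^ (i - j) * (D i j *\<^sub>v P x j) $ l) = 0"
      unfolding sum.distrib[symmetric] by (intro sum.neutral) (auto simp: sign_step)
    finally show "Tm (pertv d L C V lam x) i $ l = x i $ l" by simp
  qed (use xi in \<open>auto simp: Tm_def\<close>)
qed

lemma Lin_local:
  assumes "\<forall>k\<in>{1..n}. z k = z' k" and "i \<in> {1..n}"
  shows "Lin L C z i = Lin L C z' i"
proof -
  have h: "z (i - 1) = z' (i - 1)" if "\<not> i \<le> 1"
  proof -
    have "i - 1 \<in> {1..n}" using that assms(2) by auto
    then show ?thesis using assms(1) by blast
  qed
  show ?thesis using assms h by (auto simp: Lin_def)
qed

lemma Linpow_local:
  assumes "\<forall>k\<in>{1..n}. z k = z' k"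
  shows "\<forall>i\<in>{1..n}. (Lin L C ^^ t) z i = (Lin L C ^^ t) z' i"
proof (induction t)
  case 0
  then show ?case using assms by simp
next
  case (Suc t)
  then show ?case using Lin_local by simp
qed

lemma Nom_pow:
  assumes k: "k \<in> {1..n}"
  shows "y k \<in> carrier_vec (d k) \<Longrightarrow> (Nom L ^^ t) y k = (L k ^\<^sub>m t) *\<^sub>v y k"
proof (induction t arbitrary: y)
  case 0
  have "L k \<in> carrier_mat (d k) (d k)" using Ldim k by auto
  then show ?case using 0 by simp
next
  case (Suc t)
  have Lk: "L k \<in> carrier_mat (d k) (d k)" using Ldim k by auto
  have "(Nom L ^^ Suc t) y k = (Nom L ^^ t) (Nom L y) k" by (simp only: funpow_Suc_right o_apply)
  also have "\<dots> = (L k ^\<^sub>m t) *\<^sub>v (Nom L y k)"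
    by (rule Suc.IH) (use Suc.prems Lk in \<open>auto simp: Nom_def\<close>)
  also have "\<dots> = (L k ^\<^sub>m t * L k) *\<^sub>v y k" unfolding Nom_def using Lk Suc.prems
    by (subst assoc_mult_mat_vec[of _ "d k" "d k" _ "d k"]) auto
  finally show ?case by simp
qed

lemma Nom_pow_car:
  assumes "\<forall>k\<in>{1..n}. y k \<in> carrier_vec (d k)"
  shows "\<forall>k\<in>{1..n}. (Nom L ^^ t) y k \<in> carrier_vec (d k)"
proof
  fix k assume k: "k \<in> {1..n}"
  have Lk: "L k ^\<^sub>m t \<in> carrier_mat (d k) (d k)" using Ldim k by auto
  show "(Nom L ^^ t) y k \<in> carrier_vec (d k)"
    unfolding Nom_pow[OF k, of y t] using assms k Lk by (simp add: Nom_pow[OF k])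
qed

end





context cascade begin

lemma conj:
  assumes y: "\<forall>k\<in>{1..n}. y k \<in> carrier_vec (d k)" and i: "i \<in> {1..n}"
  shows "Lin L C (Tm y) i = Tm (Nom L y) i"
proof (cases "i = 1")
  case True
  have y1: "y 1 \<in> carrier_vec (d 1)" using y n by auto
  have L1: "L 1 \<in> carrier_mat (d 1) (d 1)" using Ldim n by auto
  show ?thesis unfolding True using Tm1[of y, OF y1] Tm1[of "Nom L y"] y1 L1
    by (simp add: Lin_def Nom_def)
next
  case False
  then have i2: "2 \<le> i" and iln: "i \<le> n" using i by auto
  have Li: "L i \<in> carrier_mat (d i) (d i)" using Ldim i by auto
  have Ci: "C i \<in> carrier_mat (d i) (d (i - 1))" using Cdim i2 iln by auto
  have yi: "y i \<in> carrier_vec (d i)" using y i by auto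
  have "i - 1 \<in> {1..n}" using i2 iln by auto
  then have yi1: "y (i - 1) \<in> carrier_vec (d (i - 1))" using y by blast
  have Dc: "D i j \<in> carrier_mat (d i) (d j)" if "j \<in> {1..<i}" for j using Dcar that iln by auto
  have Dc': "D (i - 1) j \<in> carrier_mat (d (i - 1)) (d j)" if "j \<in> {1..<i}" for j
    using Dcar[of j "i - 1"] that iln by auto
  have yj: "y j \<in> carrier_vec (d j)" if "j \<in> {1..<i}" for j using y that iln by auto
  have DY: "D i j *\<^sub>v y j \<in> carrier_vec (d i)" if "j \<in> {1..<i}" for j
    using Dc[OF that] yj[OF that] by simp
  have DY': "D (i - 1) j *\<^sub>v y j \<in> carrier_vec (d (i - 1))" if "j \<in> {1..<i - 1}" for j
  proof -
    have "j \<in> {1..<i}" using that by auto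
    then show ?thesis using Dc'[of j] yj[of j] by simp
  qed
  have Lj: "L j \<in> carrier_mat (d j) (d j)" if "j \<in> {1..<i}" for j using Ldim that iln by auto
  show ?thesis
  proof (rule eq_vecI)
    fix r assume "r < dim_vec (Tm (Nom L y) i)"
    then have r: "r < d i" using Tm_car by (simp add: Tm_def)
    define W where "W j = (C i *\<^sub>v (D (i - 1) j *\<^sub>v y j)) $ r" for j
    have lhs: "Lin L C (Tm y) i $ r = (L i *\<^sub>v Tm y i) $ r + (C i *\<^sub>v Tm y (i - 1)) $ r"
      unfolding Lin_def using False i r Li Ci Tm_car[of y i] Tm_car[of y "i - 1"] by simp
    have a: "(L i *\<^sub>v Tm y i) $ r = (L i *\<^sub>v y i) $ r +
       (\<Sum>j\<in>{1..<i}. (-1) ^ (i - j) * (L i *\<^sub>v (D i j *\<^sub>v y j)) $ r)"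
      unfolding Tm_def by (rule matvec_lin[OF Li yi _ _ r]) (use DY in auto)
    have b: "(C i *\<^sub>v Tm y (i - 1)) $ r = (C i *\<^sub>v y (i - 1)) $ r +
       (\<Sum>j\<in>{1..<i - 1}. (-1) ^ (i - 1 - j) * W j)"
      unfolding Tm_def W_def by (rule matvec_lin[OF Ci yi1 _ _ r]) (use DY' in auto)
    have rhs: "Tm (Nom L y) i $ r = (L i *\<^sub>v y i) $ r +
       (\<Sum>j\<in>{1..<i}. (-1) ^ (i - j) * (D i j *\<^sub>v (L j *\<^sub>v y j)) $ r)"
      unfolding Tm_def Nom_def using r by simp
    have a2: "(\<Sum>j\<in>{1..<i}. (-1) ^ (i - j) * (L i *\<^sub>v (D i j *\<^sub>v y j)) $ r)
       = (\<Sum>j\<in>{1..<i}. (-1) ^ (i - j) * (D i j *\<^sub>v (L j *\<^sub>v y j)) $ r)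
         + (\<Sum>j\<in>{1..<i}. (-1) ^ (i - j) * W j)"
      unfolding sum.distrib[symmetric] W_def
      by (intro sum.cong refl) (use Dsylv_vec[OF i2 iln _ _ _ r] yj in \<open>auto simp: distrib_left\<close>)
    have ins: "{1..<i} = insert (i - 1) {1..<i - 1}" using i2 by auto
    have Wi: "W (i - 1) = (C i *\<^sub>v y (i - 1)) $ r"
      unfolding W_def using Ddiag[of "i - 1"] i2 yi1 by simp
    have c: "(\<Sum>j\<in>{1..<i}. (-1) ^ (i - j) * W j) + (C i *\<^sub>v y (i - 1)) $ r +
       (\<Sum>j\<in>{1..<i - 1}. (-1) ^ (i - 1 - j) * W j) = 0"
    proof -
      have "(\<Sum>j\<in>{1..<i}. (-1) ^ (i - j) * W j) = - W (i - 1) + (\<Sum>j\<in>{1..<i - 1}. (-1) ^ (i - j) * W j)"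
        unfolding ins using i2 by (subst sum.insert) auto
      moreover have "(\<Sum>j\<in>{1..<i - 1}. (-1) ^ (i - j) * W j) + (\<Sum>j\<in>{1..<i - 1}. (-1) ^ (i - 1 - j) * W j) = 0"
        unfolding sum.distrib[symmetric] by (intro sum.neutral) (auto simp: sign_step)
      ultimately show ?thesis using Wi by (simp add: algebra_simps)
    qed
    show "Lin L C (Tm y) i $ r = Tm (Nom L y) i $ r"
      unfolding lhs a b rhs a2 using c by (simp add: algebra_simps)
  qed (use Li Ci i2 in \<open>simp add: Lin_def Tm_def\<close>)
qed

lemma iter:
  assumes y: "\<forall>k\<in>{1..n}. y k \<in> carrier_vec (d k)"
  shows "\<forall>i\<in>{1..n}. (Lin L C ^^ t) (Tm y) i = Tm ((Nom L ^^ t) y) i"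
proof (induction t)
  case 0
  then show ?case by simp
next
  case (Suc t)
  show ?case
  proof
    fix i assume i: "i \<in> {1..n}"
    have "(Lin L C ^^ Suc t) (Tm y) i = Lin L C ((Lin L C ^^ t) (Tm y)) i" by simp
    also have "\<dots> = Lin L C (Tm ((Nom L ^^ t) y)) i" by (rule Lin_local[OF Suc i])
    also have "\<dots> = Tm (Nom L ((Nom L ^^ t) y)) i" by (rule conj[OF Nom_pow_car[OF y] i])
    finally show "(Lin L C ^^ Suc t) (Tm y) i = Tm ((Nom L ^^ Suc t) y) i" by simp
  qed
qed

end





context cascade begin

lemma pow_bound:
  assumes j: "j \<in> {1..n}"
  shows "v \<in> carrier_vec (d j) \<Longrightarrow> N j ((L j ^\<^sub>m t) *\<^sub>v v) \<le> opnorm (N j) (N j) (L j) ^ t * N j v"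
proof (induction t arbitrary: v)
  case 0
  have "L j \<in> carrier_mat (d j) (d j)" using Ldim j by auto
  then show ?case using 0 by simp
next
  case (Suc t)
  have Lj: "L j \<in> carrier_mat (d j) (d j)" using Ldim j by auto
  have Nj: "is_norm_on (d j) (N j)" using norms j by auto
  note ob = opnorm_bound[OF Lj Nj Nj]
  have "(L j ^\<^sub>m Suc t) *\<^sub>v v = (L j ^\<^sub>m t) *\<^sub>v (L j *\<^sub>v v)"
    using Lj Suc.prems by (simp add: assoc_mult_mat_vec[of _ "d j" "d j" _ "d j"])
  then have "N j ((L j ^\<^sub>m Suc t) *\<^sub>v v) = N j ((L j ^\<^sub>m t) *\<^sub>v (L j *\<^sub>v v))" by simp
  also have "\<dots> \<le> opnorm (N j) (N j) (L j) ^ t * N j (L j *\<^sub>v v)"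
    using Suc.IH[of "L j *\<^sub>v v"] Lj Suc.prems by simp
  also have "\<dots> \<le> opnorm (N j) (N j) (L j) ^ t * (opnorm (N j) (N j) (L j) * N j v)"
    using ob Suc.prems by (intro mult_left_mono) auto
  finally show ?case by (simp add: mult.left_commute)
qed

lemma chain: "1 \<le> j \<Longrightarrow> j < i \<Longrightarrow> i \<le> n \<Longrightarrow>
   opnorm (N j) (N j) (L j) < opnorm (N i) (N i) (L i)"
proof (induction i)
  case 0
  then show ?case by simp
next
  case (Suc i)
  have m: "opnorm (N i) (N i) (L i) < opnorm (N (Suc i)) (N (Suc i)) (L (Suc i))"
    using mono Suc.prems by auto
  show ?case
  proof (cases "j = i")
    case True
    then show ?thesis using m by simp
  next
    case False
    then show ?thesis using Suc m by auto
  qed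
qed

lemma opn_nonneg: "j \<in> {1..n} \<Longrightarrow> 0 \<le> opnorm (N j) (N j) (L j)"
  using opnorm_bound(2)[of "L j" "d j" "d j" "N j" "N j"] Ldim norms by auto

lemma main:
  assumes i: "i \<in> {1..n}" and s: "s < d i" and x: "\<forall>k\<in>{1..n}. x k \<in> carrier_vec (d k)"
  shows "cmod (Psi V i s ((Lin L C ^^ t) x) - Psi V i s ((Nom L ^^ t) (pertv d L C V lam x)))
         \<le> fnorm (N i) (d i) (psi V i s) *
            (\<Sum>j\<in>{1..<i}. opnorm (N i) (N j) (D i j) * N j ((L j ^\<^sub>m t) *\<^sub>v P x j))"
proof -
  define p where "p = pertv d L C V lam x"
  have pc: "\<forall>k\<in>{1..n}. p k \<in> carrier_vec (d k)" unfolding p_def pertv_def using pert_car x by auto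
  define z where "z = (Nom L ^^ t) p"
  have zc: "\<forall>k\<in>{1..n}. z k \<in> carrier_vec (d k)" unfolding z_def by (rule Nom_pow_car[OF pc])
  have zj: "z j = (L j ^\<^sub>m t) *\<^sub>v P x j" if "j \<in> {1..n}" for j
    unfolding z_def using Nom_pow[OF that] pc that by (simp add: p_def pertv_def)
  have "(Lin L C ^^ t) x i = (Lin L C ^^ t) (Tm p) i"
    using Linpow_local[of x "Tm p" t] Tm_pert[OF x] i unfolding p_def by auto
  also have "\<dots> = Tm z i" unfolding z_def using iter[OF pc] i by auto
  finally have E: "(Lin L C ^^ t) x i = Tm z i" .
  have Dc: "D i j \<in> carrier_mat (d i) (d j)" if "j \<in> {1..<i}" for j using Dcar that i by auto
  have DZ: "D i j *\<^sub>v z j \<in> carrier_vec (d i)" if "j \<in> {1..<i}" for j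
    using Dc[OF that] zc that i by auto
  define R where "R = vec (d i) (\<lambda>l. \<Sum>j\<in>{1..<i}. (-1) ^ (i - j) * (D i j *\<^sub>v z j) $ l)"
  have Rc: "R \<in> carrier_vec (d i)" unfolding R_def by simp
  have zi: "z i \<in> carrier_vec (d i)" using zc i by auto
  have TR: "Tm z i = z i + R" unfolding Tm_def R_def using zi by (intro eq_vecI) auto
  have Vi: "V i \<in> carrier_mat (d i) (d i)" using Vdim i by auto
  have iVi: "invertible_mat (V i)" using Vinv i by auto
  define B where "B = minv (V i)"
  have B: "B \<in> carrier_mat (d i) (d i)" unfolding B_def using minv[OF Vi iVi] by auto
  have psi_eq: "psi V i s = (\<lambda>v. (B *\<^sub>v v) $ s)" unfolding B_def by (rule ext) (simp add: psi_def)
  have Ni: "is_norm_on (d i) (N i)" using norms i by auto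
  have "Psi V i s ((Lin L C ^^ t) x) - Psi V i s ((Nom L ^^ t) (pertv d L C V lam x))
      = (B *\<^sub>v (z i + R)) $ s - (B *\<^sub>v z i) $ s"
  proof -
    have zz: "(Nom L ^^ t) (pertv d L C V lam x) = z" by (simp add: z_def p_def)
    show ?thesis unfolding Psi_def psi_eq E TR zz ..
  qed
  also have "\<dots> = (B *\<^sub>v R) $ s"
    using B zi Rc s by (simp add: mult_add_distrib_mat_vec[OF B zi Rc])
  finally have diff: "Psi V i s ((Lin L C ^^ t) x) - Psi V i s ((Nom L ^^ t) (pertv d L C V lam x))
      = (B *\<^sub>v R) $ s" .
  have "cmod ((B *\<^sub>v R) $ s) \<le> fnorm (N i) (d i) (psi V i s) * N i R"
    unfolding psi_eq using fnorm_bound[OF B s Ni] Rc by auto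
  also have "N i R \<le> (\<Sum>j\<in>{1..<i}. cmod ((-1) ^ (i - j)) * N i (D i j *\<^sub>v z j))"
    unfolding R_def by (rule norm_vsum[OF Ni]) (use DZ in auto)
  also have "\<dots> \<le> (\<Sum>j\<in>{1..<i}. opnorm (N i) (N j) (D i j) * N j ((L j ^\<^sub>m t) *\<^sub>v P x j))"
  proof (intro sum_mono)
    fix j assume j: "j \<in> {1..<i}"
    have jn: "j \<in> {1..n}" using j i by auto
    have Nj: "is_norm_on (d j) (N j)" using norms jn by auto
    have "cmod ((-1::complex) ^ (i - j)) = 1" by (simp add: norm_power)
    moreover have "z j \<in> carrier_vec (d j)" using zc jn by auto
    ultimately have "cmod ((-1) ^ (i - j)) * N i (D i j *\<^sub>v z j) \<le> opnorm (N i) (N j) (D i j) * N j (z j)"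
      using opnorm_bound(1)[OF Dc[OF j] Nj Ni] by auto
    then show "cmod ((-1) ^ (i - j)) * N i (D i j *\<^sub>v z j) \<le> opnorm (N i) (N j) (D i j) * N j ((L j ^\<^sub>m t) *\<^sub>v P x j)"
      unfolding zj[OF jn] .
  qed
  finally show ?thesis unfolding diff
    using fnorm_nonneg[OF B s Ni] unfolding psi_eq[symmetric] by (simp add: mult_left_mono)
qed

end





context cascade begin

lemma limit:
  assumes i: "i \<in> {1..n}" and s: "s < d i" and x: "\<forall>k\<in>{1..n}. x k \<in> carrier_vec (d k)"
  shows "(\<lambda>t. cmod (Psi V i s ((Lin L C ^^ t) x) - Psi V i s ((Nom L ^^ t) (pertv d L C V lam x)))
                 / opnorm (N i) (N i) (L i) ^ t) \<longlonglongrightarrow> 0"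
proof -
  define f where "f t = cmod (Psi V i s ((Lin L C ^^ t) x) - Psi V i s ((Nom L ^^ t) (pertv d L C V lam x)))" for t
  define F where "F = fnorm (N i) (d i) (psi V i s)"
  define a where "a j = opnorm (N i) (N j) (D i j)" for j
  define q where "q j = N j (P x j)" for j
  define r where "r j = opnorm (N j) (N j) (L j)" for j
  have Ni: "is_norm_on (d i) (N i)" using norms i by auto
  have Vi: "V i \<in> carrier_mat (d i) (d i)" using Vdim i by auto
  have iVi: "invertible_mat (V i)" using Vinv i by auto
  have psi_eq: "psi V i s = (\<lambda>v. (minv (V i) *\<^sub>v v) $ s)" by (rule ext) (simp add: psi_def)
  have F0: "0 \<le> F" unfolding F_def psi_eq by (rule fnorm_nonneg[OF minv(1)[OF Vi iVi] s Ni])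
  have a0: "0 \<le> a j" if "j \<in> {1..<i}" for j
  proof -
    have "D i j \<in> carrier_mat (d i) (d j)" using Dcar that i by auto
    moreover have "is_norm_on (d j) (N j)" using norms that i by auto
    ultimately show ?thesis unfolding a_def using opnorm_bound(2) Ni by blast
  qed
  have bound: "f t \<le> F * (\<Sum>j\<in>{1..<i}. a j * (r j ^ t * q j))" for t
  proof -
    have "f t \<le> F * (\<Sum>j\<in>{1..<i}. a j * N j ((L j ^\<^sub>m t) *\<^sub>v P x j))"
      unfolding f_def F_def a_def using main[OF i s x] by simp
    also have "\<dots> \<le> F * (\<Sum>j\<in>{1..<i}. a j * (r j ^ t * q j))"
    proof (intro mult_left_mono[OF _ F0] sum_mono mult_left_mono[OF _ a0])
      fix j assume j: "j \<in> {1..<i}"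
      have jn: "j \<in> {1..n}" using j i by auto
      have "P x j \<in> carrier_vec (d j)" using pert_car[OF jn] x jn by auto
      then show "N j ((L j ^\<^sub>m t) *\<^sub>v P x j) \<le> r j ^ t * q j"
        unfolding r_def q_def by (rule pow_bound[OF jn])
    qed
    finally show ?thesis .
  qed
  show ?thesis unfolding f_def[symmetric]
  proof (cases "i = 1")
    case True
    have "f t = 0" for t using bound[of t] True unfolding f_def by simp
    then show "(\<lambda>t. f t / opnorm (N i) (N i) (L i) ^ t) \<longlonglongrightarrow> 0" by simp
  next
    case False
    then have i2: "2 \<le> i" using i by auto
    have r1: "0 \<le> r 1" unfolding r_def using opn_nonneg n by auto
    have rlt: "r j < r i" if "j \<in> {1..<i}" for j unfolding r_def using chain that i by auto
    have rpos: "0 < r i" using r1 rlt[of 1] i2 by auto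
    have rj0: "0 \<le> r j" if "j \<in> {1..<i}" for j unfolding r_def using opn_nonneg that i by auto
    define g where "g t = (\<Sum>j\<in>{1..<i}. (F * a j * q j) * (r j / r i) ^ t)" for t
    have fg: "f t / r i ^ t \<le> g t" for t
    proof -
      have "f t / r i ^ t \<le> F * (\<Sum>j\<in>{1..<i}. a j * (r j ^ t * q j)) / r i ^ t"
        using bound[of t] rpos by (simp add: divide_right_mono)
      also have "\<dots> = g t" unfolding g_def sum_distrib_left sum_divide_distrib
        by (intro sum.cong refl) (use rpos in \<open>simp add: power_divide\<close>)
      finally show ?thesis .
    qed
    have f0: "0 \<le> f t / r i ^ t" for t unfolding f_def using rpos by simp
    have g0: "g \<longlonglongrightarrow> 0"
    proof -
      have "(\<lambda>t. (\<Sum>j\<in>{1..<i}. (F * a j * q j) * (r j / r i) ^ t)) \<longlonglongrightarrow> (\<Sum>j\<in>{1..<i}. (F * a j * q j) * 0)"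
      proof (intro tendsto_sum tendsto_mult tendsto_const)
        fix j assume j: "j \<in> {1..<i}"
        show "(\<lambda>t. (r j / r i) ^ t) \<longlonglongrightarrow> 0"
          using rj0[OF j] rlt[OF j] rpos by (intro LIMSEQ_realpow_zero) auto
      qed
      then show ?thesis unfolding g_def by simp
    qed
    have "(\<lambda>t. f t / r i ^ t) \<longlonglongrightarrow> 0"
      by (rule tendsto_sandwich[OF _ _ tendsto_const g0]) (use f0 fg in auto)
    then show "(\<lambda>t. f t / opnorm (N i) (N i) (L i) ^ t) \<longlonglongrightarrow> 0" unfolding r_def .
  qed
qed

end


theorem theorem2:
  fixes n :: nat and d :: "nat \<Rightarrow> nat"
    and L C V :: "nat \<Rightarrow> complex mat" and lam :: "nat \<Rightarrow> nat \<Rightarrow> complex"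
    and N :: "nat \<Rightarrow> complex vec \<Rightarrow> real"
  assumes n: "n \<ge> 1"
    and d: "\<forall>i\<in>{1..n}. d i \<ge> 1"
    and norms: "\<forall>i\<in>{1..n}. is_norm_on (d i) (N i)"
    and Ldim: "\<forall>i\<in>{1..n}. L i \<in> carrier_mat (d i) (d i)"
    and Cdim: "\<forall>i\<in>{2..n}. C i \<in> carrier_mat (d i) (d (i - 1))"
    and Vdim: "\<forall>i\<in>{1..n}. V i \<in> carrier_mat (d i) (d i)"
    and Linv: "\<forall>i\<in>{1..n}. invertible_mat (L i)"
    and Vinv: "\<forall>i\<in>{1..n}. invertible_mat (V i)"
    and diag: "\<forall>i\<in>{1..n}. L i * V i = V i * diagm (d i) (lam i)"
    and spec: "\<forall>i\<in>{1..n}. \<forall>j\<in>{1..n}. i \<noteq> j \<longrightarrow> spectrum (L i) \<inter> spectrum (L j) = {}"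
    and mono: "\<forall>i\<in>{1..<n}. opnorm (N i) (N i) (L i) < opnorm (N (i + 1)) (N (i + 1)) (L (i + 1))"
    and le1: "opnorm (N n) (N n) (L n) \<le> 1"
  shows "\<forall>i\<in>{1..n}. \<forall>s<d i. \<forall>x. (\<forall>k\<in>{1..n}. x k \<in> carrier_vec (d k)) \<longrightarrow>
           (\<forall>t::nat.
              cmod (Psi V i s ((Lin L C ^^ t) x) - Psi V i s ((Nom L ^^ t) (pertv d L C V lam x)))
              \<le> fnorm (N i) (d i) (psi V i s) *
                 (\<Sum>j\<in>{1..<i}. opnorm (N i) (N j) (Dm d L C V lam i j)
                                 * N j ((L j ^\<^sub>m t) *\<^sub>v pert d L C V lam x j)))
         \<and> ((\<lambda>t. cmod (Psi V i s ((Lin L C ^^ t) x) - Psi V i s ((Nom L ^^ t) (pertv d L C V lam x)))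
                 / opnorm (N i) (N i) (L i) ^ t) \<longlonglongrightarrow> 0)"
proof -
  interpret cascade n d L C V lam N
    by (rule cascade.intro[OF n d norms Ldim Cdim Vdim Linv Vinv diag spec mono])
  show ?thesis
  proof (intro ballI allI impI conjI)
    fix i s t and x :: "nat \<Rightarrow> complex vec"
    assume i: "i \<in> {1..n}" and s: "s < d i" and x: "\<forall>k\<in>{1..n}. x k \<in> carrier_vec (d k)"
    show "cmod (Psi V i s ((Lin L C ^^ t) x) - Psi V i s ((Nom L ^^ t) (pertv d L C V lam x)))
              \<le> fnorm (N i) (d i) (psi V i s) *
                 (\<Sum>j\<in>{1..<i}. opnorm (N i) (N j) (Dm d L C V lam i j)
                                 * N j ((L j ^\<^sub>m t) *\<^sub>v pert d L C V lam x j))"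
      by (rule main[OF i s x])
  next
    fix i s and x :: "nat \<Rightarrow> complex vec"
    assume i: "i \<in> {1..n}" and s: "s < d i" and x: "\<forall>k\<in>{1..n}. x k \<in> carrier_vec (d k)"
    show "(\<lambda>t. cmod (Psi V i s ((Lin L C ^^ t) x) - Psi V i s ((Nom L ^^ t) (pertv d L C V lam x)))
                 / opnorm (N i) (N i) (L i) ^ t) \<longlonglongrightarrow> 0"
      by (rule limit[OF i s x])
  qed
qed

end
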